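(* Consider DODA in the multi-agent setting of the context. Let the maximum delay be bounded by $\tau$, assume that for every agent $i$ and time $t$, $\mathcal S_t\subset\mathcal R^i_t$, and that the feedback of time step $t$ is the whole vector field $V_t=\nabla f_t$, which can be evaluated anywhere without delay. Suppose each $V_t$ is $L$-Lipschitz and that $\|V_t(x)\|\le G$, $\|\tilde V_t(x)\|\le G$ for all $t$ and $x$, where $\tilde V_t=V_s$ for some $s\in\mathcal S_t$. Let $D_t=\sum_{s\in\mathcal S_t}\|V_s(x_s)-\tilde V_s(x_s)\|^2$. Then for any $p$ with $\|p-x_1\|\le r$, running DODA with $\tilde g_{t+1/2}=\tilde V_t(x_t)$, \[\gamma_t=\min\Big(\frac{r\sqrt{4\tau+1}}{2\sqrt{D_t+4G^2(\tau+1)}},\ \frac{1}{\sqrt2L}\Big),\qquad \eta_t=\min\Big(\frac{r}{2\sqrt{(4\tau+1)(D_t+4G^2(3\tau+1))}},\ \frac{1}{\sqrt2L(4\tau+1)}\Big)\] guarantees \[R_T(p)\le\max\Big(\sqrt2r^2L(4\tau+1),\ 2r\sqrt{(4\tau+1)\big(V_T+4G^2(3\tau+1)\big)}\Big),\] where $V_T=\sum_{t=1}^T\|V_t(x_t)-\tilde V_t(x_t)\|^2$.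
   Context: Unconstrained Euclidean setting: $\mathcal V$ finite-dimensional Euclidean space; losses $f_t$ convex and differentiable. Several agents; at each round $t=1,\dots,T$ one agent $i(t)$ is active. $\mathcal S^i_t\subset\{1,\dots,t-1\}$: timestamps of feedback available to agent $i$ at time $t$, nondecreasing in $t$; $\mathcal S_t=\mathcal S^{i(t)}_t$. DODA: given $x_1$, $x_t=x_1-\eta_t\sum_{s\in\mathcal S_t}g_{s+1/2}$, $x_{t+1/2}=x_t-\gamma_t\tilde g_{t+1/2}$; the active agent plays $x_{t+1/2}$, and $g_{t+1/2}=V_t(x_{t+1/2})$. Regret: $R_T(p)=\sum_{t=1}^Tf_t(x_{t+1/2})-\sum_{t=1}^Tf_t(p)$. Maximum delay bounded by $\tau$: $\{1,\dots,t-\tau-1\}\subset\mathcal S_t$. Per-agent arrival order: for each agent $i$, $\sigma_i$ is a permutation of $\{1,\dots,T\}$ listing the order in which agent $i$ receives the feedback of time steps $1,\dots,T$, consistent with availability ($\mathcal S^i_t=\{\sigma_i(1),\dots,\sigma_i(|\mathcal S^i_t|)\}$); $\mathcal R^i_t=\{\sigma_i(1),\dots,\sigma_i(\sigma_i^{-1}(t)-1)\}$ is the set of timestamps of feedback received by $i$ before that of time $t$. *)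

theory Defs
  imports "HOL-Analysis.Analysis"
begin

text \<open>min(a, 1/b) with the convention 1/0 = +infinity (so that the term
  1/(sqrt 2 L) is ignored when L = 0).\<close>
definition min_recip :: "real \<Rightarrow> real \<Rightarrow> real" where
  "min_recip a b = (if b = 0 then a else min a (1 / b))"

end

theory Submission
  imports Defs
begin

lemma conv_grad:
  fixes f :: "'a::euclidean_space \<Rightarrow> real"
  assumes cv: "convex_on UNIV f" and d: "(f has_derivative (\<lambda>h. v \<bullet> h)) (at y)"
  shows "f y + v \<bullet> (p - y) \<le> f p"
proof -
  define h where "h = p - y"
  define \<phi> where "\<phi> = (\<lambda>u::real. f (y + u *\<^sub>R h))"
  have l: "((\<lambda>u::real. y + u *\<^sub>R h) has_derivative (\<lambda>u. u *\<^sub>R h)) (at 0)"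
    by (auto intro!: derivative_eq_intros)
  have d0: "(f has_derivative (\<lambda>h. v \<bullet> h)) (at (y + 0 *\<^sub>R h))" using d by simp
  have "(\<phi> has_derivative (\<lambda>u. v \<bullet> (u *\<^sub>R h))) (at 0)"
    unfolding \<phi>_def using has_derivative_compose[OF l d0] by (simp add: o_def)
  hence "(\<phi> has_field_derivative (v \<bullet> h)) (at 0)"
    unfolding has_field_derivative_def by (simp add: mult.commute[of _ "v \<bullet> h"])
  moreover have "convex_on UNIV \<phi>"
  proof (rule convex_onI)
    fix t :: real and a b :: real assume t: "0 < t" "t < 1"
    have e: "y + ((1 - t) *\<^sub>R a + t *\<^sub>R b) *\<^sub>R h = (1 - t) *\<^sub>R (y + a *\<^sub>R h) + t *\<^sub>R (y + b *\<^sub>R h)"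
      by (simp add: algebra_simps)
    show "\<phi> ((1 - t) *\<^sub>R a + t *\<^sub>R b) \<le> (1 - t) * \<phi> a + t * \<phi> b"
      unfolding \<phi>_def e using convex_onD[OF cv, of t] t by auto
  qed (rule convex_UNIV)
  ultimately have "\<phi> 1 - \<phi> 0 \<ge> (v \<bullet> h) * (1 - 0)"
    using convex_on_imp_above_tangent[where A=UNIV and c=0 and x=1 and f=\<phi> and f'="v \<bullet> h"]
    by simp
  thus ?thesis by (simp add: \<phi>_def h_def)
qed

lemma minker:
  fixes g :: "nat \<Rightarrow> 'a::real_inner"
  assumes "finite A" "\<forall>x\<in>A. 0 \<le> \<mu> x"
  shows "0 \<le> (\<Sum>s\<in>A. \<Sum>t\<in>A. min (\<mu> s) (\<mu> t) * (g s \<bullet> g t))"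
  using assms
proof (induction "card A" arbitrary: A \<mu> rule: less_induct)
  case less
  show ?case
  proof (cases "A = {}")
    case True thus ?thesis by simp
  next
    case False
    obtain a where a: "a \<in> A" "\<forall>x\<in>A. \<mu> a \<le> \<mu> x"
      using Min_in[of "\<mu> ` A"] Min_le[of "\<mu> ` A"] less.prems False
      by (metis (no_types, lifting) empty_is_image finite_imageI image_iff imageI)
    define m where "m = \<mu> a"
    define \<mu>' where "\<mu>' = (\<lambda>x. \<mu> x - m)"
    have m0: "0 \<le> m" using less.prems a by (simp add: m_def)
    have mu'0: "\<forall>x\<in>A. 0 \<le> \<mu>' x" using a by (simp add: \<mu>'_def m_def)
    have split: "min (\<mu> s) (\<mu> t) * (g s \<bullet> g t) = m * (g s \<bullet> g t) + min (\<mu>' s) (\<mu>' t) * (g s \<bullet> g t)" for s t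
      by (simp add: \<mu>'_def algebra_simps min_def)
    have S1: "(\<Sum>s\<in>A. \<Sum>t\<in>A. m * (g s \<bullet> g t)) = m * ((\<Sum>s\<in>A. g s) \<bullet> (\<Sum>t\<in>A. g t))"
      by (simp add: sum_distrib_left inner_sum_left inner_sum_right inner_commute)
    have S1p: "0 \<le> (\<Sum>s\<in>A. \<Sum>t\<in>A. m * (g s \<bullet> g t))"
      unfolding S1 using m0 by simp
    have fA: "finite A" using less.prems by simp
    have z: "min (\<mu>' a) (\<mu>' t) = 0" if "t \<in> A" for t
      using mu'0 that by (simp add: \<mu>'_def m_def)
    have z2: "min (\<mu>' t) (\<mu>' a) = 0" if "t \<in> A" for t
      using mu'0 that by (simp add: \<mu>'_def m_def)
    have S2: "(\<Sum>s\<in>A. \<Sum>t\<in>A. min (\<mu>' s) (\<mu>' t) * (g s \<bullet> g t))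
        = (\<Sum>s\<in>A-{a}. \<Sum>t\<in>A-{a}. min (\<mu>' s) (\<mu>' t) * (g s \<bullet> g t))"
    proof -
      have "(\<Sum>s\<in>A. \<Sum>t\<in>A. min (\<mu>' s) (\<mu>' t) * (g s \<bullet> g t))
          = (\<Sum>s\<in>A-{a}. \<Sum>t\<in>A. min (\<mu>' s) (\<mu>' t) * (g s \<bullet> g t))"
        by (subst sum.remove[OF fA a(1)]) (simp add: z)
      also have "\<dots> = (\<Sum>s\<in>A-{a}. \<Sum>t\<in>A-{a}. min (\<mu>' s) (\<mu>' t) * (g s \<bullet> g t))"
      proof (rule sum.cong[OF refl])
        fix s assume s: "s \<in> A - {a}"
        show "(\<Sum>t\<in>A. min (\<mu>' s) (\<mu>' t) * (g s \<bullet> g t)) = (\<Sum>t\<in>A-{a}. min (\<mu>' s) (\<mu>' t) * (g s \<bullet> g t))"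
          using s by (subst sum.remove[OF fA a(1)]) (simp add: z2)
      qed
      finally show ?thesis .
    qed
    have lt: "card (A - {a}) < card A" using fA a(1) by (meson card_Diff1_less)
    have S2p: "0 \<le> (\<Sum>s\<in>A-{a}. \<Sum>t\<in>A-{a}. min (\<mu>' s) (\<mu>' t) * (g s \<bullet> g t))"
      using less.hyps[OF lt, of \<mu>'] fA mu'0 by simp
    show ?thesis unfolding split sum.distrib using S1p S2 S2p by simp
  qed
qed

lemma card_near:
  fixes s \<tau> T :: nat
  shows "card {t\<in>{1..T}. t \<noteq> s \<and> s \<le> t + \<tau> \<and> t \<le> s + \<tau>} \<le> 2 * \<tau>"
proof -
  have "{t\<in>{1..T}. t \<noteq> s \<and> s \<le> t + \<tau> \<and> t \<le> s + \<tau>} \<subseteq> {s-\<tau>..<s} \<union> {s<..s+\<tau>}"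
    by auto
  hence "card {t\<in>{1..T}. t \<noteq> s \<and> s \<le> t + \<tau> \<and> t \<le> s + \<tau>} \<le> card ({s-\<tau>..<s} \<union> {s<..s+\<tau>})"
    by (intro card_mono) auto
  also have "\<dots> \<le> card {s-\<tau>..<s} + card {s<..s+\<tau>}" by (rule card_Un_le)
  also have "\<dots> \<le> 2 * \<tau>" by simp
  finally show ?thesis .
qed

lemma near_sum:
  fixes h :: "nat \<Rightarrow> real"
  assumes "\<forall>s\<in>{1..T}. 0 \<le> h s"
  shows "(\<Sum>s\<in>{1..T}. \<Sum>t\<in>{1..T}. (if t \<noteq> s \<and> s \<le> t + \<tau> \<and> t \<le> s + \<tau> then h s else 0))
         \<le> 2 * real \<tau> * (\<Sum>s\<in>{1..T}. h s)"
proof -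
  have "(\<Sum>s\<in>{1..T}. \<Sum>t\<in>{1..T}. (if t \<noteq> s \<and> s \<le> t + \<tau> \<and> t \<le> s + \<tau> then h s else 0))
      = (\<Sum>s\<in>{1..T}. real (card {t\<in>{1..T}. t \<noteq> s \<and> s \<le> t + \<tau> \<and> t \<le> s + \<tau>}) * h s)"
    by (intro sum.cong refl) (simp add: sum.If_cases Int_def conj_commute)
  also have "\<dots> \<le> (\<Sum>s\<in>{1..T}. 2 * real \<tau> * h s)"
  proof (rule sum_mono)
    fix s assume "s \<in> {1..T}"
    hence "0 \<le> h s" using assms by auto
    moreover have "real (card {t\<in>{1..T}. t \<noteq> s \<and> s \<le> t + \<tau> \<and> t \<le> s + \<tau>}) \<le> 2 * real \<tau>"
      using card_near[of T s \<tau>] by linarith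
    ultimately show "real (card {t\<in>{1..T}. t \<noteq> s \<and> s \<le> t + \<tau> \<and> t \<le> s + \<tau>}) * h s \<le> 2 * real \<tau> * h s"
      by (rule mult_right_mono[rotated])
  qed
  also have "\<dots> = 2 * real \<tau> * (\<Sum>s\<in>{1..T}. h s)" by (simp add: sum_distrib_left)
  finally show ?thesis .
qed

lemma inner_min_bound:
  fixes u v :: "'a::real_inner"
  assumes "0 \<le> a" "0 \<le> b"
  shows "min a b * (u \<bullet> v) \<le> (a * (norm u)\<^sup>2 + b * (norm v)\<^sup>2) / 2"
proof -
  have c: "\<bar>u \<bullet> v\<bar> \<le> norm u * norm v" by (rule Cauchy_Schwarz_ineq2)
  have "norm u * norm v \<le> ((norm u)\<^sup>2 + (norm v)\<^sup>2) / 2"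
    using sum_squares_bound[of "norm u" "norm v"] by (simp add: power2_eq_square)
  hence q: "(u \<bullet> v) \<le> ((norm u)\<^sup>2 + (norm v)\<^sup>2) / 2" using c by linarith
  have m0: "0 \<le> min a b" using assms by simp
  have "min a b * (u \<bullet> v) \<le> min a b * (((norm u)\<^sup>2 + (norm v)\<^sup>2) / 2)"
    by (rule mult_left_mono[OF q m0])
  also have "\<dots> = (min a b * (norm u)\<^sup>2 + min a b * (norm v)\<^sup>2) / 2" by (simp add: algebra_simps)
  also have "\<dots> \<le> (a * (norm u)\<^sup>2 + b * (norm v)\<^sup>2) / 2"
    by (intro divide_right_mono add_mono mult_right_mono) auto
  finally show ?thesis .
qed

lemma arith_aux:
  fixes X K D B1 B2 t H :: real
  shows "K + D - (B1 + B2) / 4 \<le> X \<Longrightarrow> 0 \<le> K \<Longrightarrow> B1 \<le> 2 * t * H \<Longrightarrow> B2 \<le> 2 * t * H \<Longrightarrow> t * H \<le> D \<Longrightarrow> 0 \<le> X"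
  by (simp add: field_simps)

lemma quad:
  fixes g :: "nat \<Rightarrow> 'a::real_inner" and S :: "nat \<Rightarrow> nat set"
    and \<eta> \<gamma> :: "nat \<Rightarrow> real" and e :: real and \<tau> T :: nat
  assumes Sp: "\<forall>t\<in>{1..T}. S t \<subseteq> {1..<t}"
    and Sd: "\<forall>t\<in>{1..T}. {1..t-\<tau>-1} \<subseteq> S t"
    and mono: "\<forall>t\<in>{1..T}. \<forall>s\<in>S t. \<eta> t \<le> \<eta> s"
    and e: "\<forall>t\<in>{1..T}. e \<le> \<eta> t"
    and e0: "0 \<le> e"
    and gam: "\<forall>t\<in>{1..T}. (2 * real \<tau> + 1) * \<eta> t \<le> \<gamma> t"
  shows "e / 2 * (norm (\<Sum>t\<in>{1..T}. g t))\<^sup>2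
     \<le> (\<Sum>t\<in>{1..T}. \<eta> t * (g t \<bullet> (\<Sum>s\<in>S t. g s))) + (\<Sum>t\<in>{1..T}. \<gamma> t / 2 * (norm (g t))\<^sup>2)"
proof -
  define I where "I = {1..T}"
  define \<mu> where "\<mu> = (\<lambda>x. \<eta> x - e)"
  define c where "c = (\<lambda>s t. (if s \<in> S t then \<eta> t else 0) / 2 + (if t \<in> S s then \<eta> s else 0) / 2
                           + (if s = t then \<gamma> t else 0) / 2 - e / 2)"
  define cond where "cond = (\<lambda>s t::nat. t \<noteq> s \<and> s \<le> t + \<tau> \<and> t \<le> s + \<tau>)"
  define h where "h = (\<lambda>s. \<eta> s * (norm (g s))\<^sup>2)"
  have fI: "finite I" by (simp add: I_def)
  have \<eta>0: "\<forall>t\<in>I. 0 \<le> \<eta> t" using e e0 I_def by fastforce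
  have h0: "\<forall>t\<in>I. 0 \<le> h t" using \<eta>0 by (simp add: h_def)
  have pw: "c s t * (g s \<bullet> g t) \<ge> min (\<mu> s) (\<mu> t) / 2 * (g s \<bullet> g t)
        + (if s = t then (\<gamma> t - \<eta> t) / 2 * (norm (g t))\<^sup>2 else 0)
        - ((if cond s t then h s else 0) + (if cond t s then h t else 0)) / 4"
    if s: "s \<in> I" and t: "t \<in> I" for s t
  proof -
    have tnt: "t \<notin> S t"
    proof
      assume "t \<in> S t"
      moreover have "S t \<subseteq> {1..<t}" using Sp t I_def by auto
      ultimately show False by auto
    qed
    have hs: "0 \<le> h s" "0 \<le> h t" using h0 s t by auto
    show ?thesis
    proof (cases "s = t")
      case True
      then show ?thesis using tnt hs
        by (simp add: c_def \<mu>_def power2_norm_eq_inner cond_def) (simp add: field_simps)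
    next
      case st: False
      show ?thesis
      proof (cases "s \<in> S t")
        case True
        have "S t \<subseteq> {1..<t}" "S s \<subseteq> {1..<s}" using Sp s t I_def by auto
        hence "t \<notin> S s" using True by (meson atLeastLessThan_iff less_asym subsetD)
        moreover have "\<eta> t \<le> \<eta> s" using mono True t I_def by auto
        ultimately have "c s t = min (\<mu> s) (\<mu> t) / 2" using True st
          by (simp add: c_def \<mu>_def min_def field_simps)
        hence "c s t * (g s \<bullet> g t) = min (\<mu> s) (\<mu> t) / 2 * (g s \<bullet> g t)" by simp
        moreover have "0 \<le> ((if cond s t then h s else 0) + (if cond t s then h t else 0)) / 4"
          using hs by simp
        moreover have "(if s = t then (\<gamma> t - \<eta> t) / 2 * (norm (g t))\<^sup>2 else 0) = 0" using st by simp
        ultimately show ?thesis by linarith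
      next
        case sn: False
        show ?thesis
        proof (cases "t \<in> S s")
          case True
          have "\<eta> s \<le> \<eta> t" using mono True s I_def by auto
          hence "c s t = min (\<mu> s) (\<mu> t) / 2" using True st sn
            by (simp add: c_def \<mu>_def min_def field_simps)
          hence "c s t * (g s \<bullet> g t) = min (\<mu> s) (\<mu> t) / 2 * (g s \<bullet> g t)" by simp
          moreover have "0 \<le> ((if cond s t then h s else 0) + (if cond t s then h t else 0)) / 4"
            using hs by simp
          moreover have "(if s = t then (\<gamma> t - \<eta> t) / 2 * (norm (g t))\<^sup>2 else 0) = 0" using st by simp
          ultimately show ?thesis by linarith
        next
          case tn: False
          have cst: "cond s t" "cond t s"
          proof -
            have "\<not> s + \<tau> < t"
            proof
              assume "s + \<tau> < t"
              hence "s \<in> {1..t-\<tau>-1}" using s I_def by auto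
              moreover have "{1..t-\<tau>-1} \<subseteq> S t" using Sd t I_def by auto
              ultimately show False using sn by blast
            qed
            moreover have "\<not> t + \<tau> < s"
            proof
              assume "t + \<tau> < s"
              hence "t \<in> {1..s-\<tau>-1}" using t I_def by auto
              moreover have "{1..s-\<tau>-1} \<subseteq> S s" using Sd s I_def by auto
              ultimately show False using tn by blast
            qed
            ultimately show "cond s t" "cond t s" using st by (auto simp: cond_def)
          qed
          have b: "min (\<eta> s) (\<eta> t) * (g s \<bullet> g t) \<le> (h s + h t) / 2"
            using inner_min_bound[of "\<eta> s" "\<eta> t" "g s" "g t"] \<eta>0 s t by (simp add: h_def)
          have "min (\<mu> s) (\<mu> t) = min (\<eta> s) (\<eta> t) - e" by (simp add: \<mu>_def min_def)
          hence m: "min (\<mu> s) (\<mu> t) / 2 * (g s \<bullet> g t) = min (\<eta> s) (\<eta> t) * (g s \<bullet> g t) / 2 - e * (g s \<bullet> g t) / 2"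
            by (simp add: left_diff_distrib diff_divide_distrib)
          have cc: "c s t * (g s \<bullet> g t) = - (e * (g s \<bullet> g t) / 2)" using st sn tn by (simp add: c_def)
          have z: "(if s = t then (\<gamma> t - \<eta> t) / 2 * (norm (g t))\<^sup>2 else 0) = 0" using st by simp
          have bb: "((if cond s t then h s else 0) + (if cond t s then h t else 0)) / 4 = (h s + h t) / 4"
            using cst by simp
          show ?thesis unfolding m cc z bb using b by linarith
        qed
      qed
    qed
  qed
  have sumpw: "(\<Sum>s\<in>I. \<Sum>t\<in>I. c s t * (g s \<bullet> g t)) \<ge>
      (\<Sum>s\<in>I. \<Sum>t\<in>I. min (\<mu> s) (\<mu> t) / 2 * (g s \<bullet> g t))
      + (\<Sum>s\<in>I. \<Sum>t\<in>I. (if s = t then (\<gamma> t - \<eta> t) / 2 * (norm (g t))\<^sup>2 else 0))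
      - ((\<Sum>s\<in>I. \<Sum>t\<in>I. (if cond s t then h s else 0)) + (\<Sum>s\<in>I. \<Sum>t\<in>I. (if cond t s then h t else 0))) / 4"
  proof -
    have "(\<Sum>s\<in>I. \<Sum>t\<in>I. min (\<mu> s) (\<mu> t) / 2 * (g s \<bullet> g t)
      + (if s = t then (\<gamma> t - \<eta> t) / 2 * (norm (g t))\<^sup>2 else 0)
      - ((if cond s t then h s else 0) + (if cond t s then h t else 0)) / 4)
      \<le> (\<Sum>s\<in>I. \<Sum>t\<in>I. c s t * (g s \<bullet> g t))"
      by (intro sum_mono) (use pw in auto)
    moreover have "(\<Sum>s\<in>I. \<Sum>t\<in>I. min (\<mu> s) (\<mu> t) / 2 * (g s \<bullet> g t)
      + (if s = t then (\<gamma> t - \<eta> t) / 2 * (norm (g t))\<^sup>2 else 0)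
      - ((if cond s t then h s else 0) + (if cond t s then h t else 0)) / 4)
      = (\<Sum>s\<in>I. \<Sum>t\<in>I. min (\<mu> s) (\<mu> t) / 2 * (g s \<bullet> g t))
      + (\<Sum>s\<in>I. \<Sum>t\<in>I. (if s = t then (\<gamma> t - \<eta> t) / 2 * (norm (g t))\<^sup>2 else 0))
      - ((\<Sum>s\<in>I. \<Sum>t\<in>I. (if cond s t then h s else 0)) + (\<Sum>s\<in>I. \<Sum>t\<in>I. (if cond t s then h t else 0))) / 4"
      by (simp only: sum.distrib sum_subtractf sum_divide_distrib[symmetric])
    ultimately show ?thesis by linarith
  qed
  have K: "0 \<le> (\<Sum>s\<in>I. \<Sum>t\<in>I. min (\<mu> s) (\<mu> t) / 2 * (g s \<bullet> g t))"
  proof -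
    have "0 \<le> (\<Sum>s\<in>I. \<Sum>t\<in>I. min (\<mu> s) (\<mu> t) * (g s \<bullet> g t))"
      using minker[OF fI, of \<mu> g] e I_def by (auto simp: \<mu>_def)
    thus ?thesis by (simp add: sum_divide_distrib[symmetric])
  qed
  have Dg: "(\<Sum>s\<in>I. \<Sum>t\<in>I. (if s = t then (\<gamma> t - \<eta> t) / 2 * (norm (g t))\<^sup>2 else 0))
      = (\<Sum>s\<in>I. (\<gamma> s - \<eta> s) / 2 * (norm (g s))\<^sup>2)"
    by (intro sum.cong refl) (simp add: fI)
  have B1: "(\<Sum>s\<in>I. \<Sum>t\<in>I. (if cond s t then h s else 0)) \<le> 2 * real \<tau> * (\<Sum>s\<in>I. h s)"
    using near_sum[of T h \<tau>] h0 unfolding I_def cond_def by auto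
  have B2: "(\<Sum>s\<in>I. \<Sum>t\<in>I. (if cond t s then h t else 0)) \<le> 2 * real \<tau> * (\<Sum>s\<in>I. h s)"
    using B1 sum.swap[of "\<lambda>s t. (if cond t s then h t else 0)" I I] by simp
  have diag: "(\<Sum>s\<in>I. \<Sum>t\<in>I. (if s = t then (\<gamma> t - \<eta> t) / 2 * (norm (g t))\<^sup>2 else 0))
      \<ge> real \<tau> * (\<Sum>s\<in>I. h s)"
  proof -
    have "(\<Sum>s\<in>I. real \<tau> * h s) \<le> (\<Sum>s\<in>I. (\<gamma> s - \<eta> s) / 2 * (norm (g s))\<^sup>2)"
    proof (rule sum_mono)
      fix s assume s: "s \<in> I"
      have "2 * real \<tau> * \<eta> s \<le> \<gamma> s - \<eta> s" using gam s I_def by (auto simp: algebra_simps)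
      hence "2 * real \<tau> * \<eta> s * (norm (g s))\<^sup>2 \<le> (\<gamma> s - \<eta> s) * (norm (g s))\<^sup>2"
        by (rule mult_right_mono) simp
      thus "real \<tau> * h s \<le> (\<gamma> s - \<eta> s) / 2 * (norm (g s))\<^sup>2" by (simp add: h_def)
    qed
    thus ?thesis using Dg by (simp add: sum_distrib_left)
  qed
  have lower: "0 \<le> (\<Sum>s\<in>I. \<Sum>t\<in>I. c s t * (g s \<bullet> g t))"
    using arith_aux[OF sumpw K B1 B2 diag] .
  have E1: "(\<Sum>s\<in>I. \<Sum>t\<in>I. (if s \<in> S t then \<eta> t else 0) / 2 * (g s \<bullet> g t))
      = (\<Sum>t\<in>I. \<eta> t * (g t \<bullet> (\<Sum>s\<in>S t. g s))) / 2"
  proof -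
    have "(\<Sum>s\<in>I. \<Sum>t\<in>I. (if s \<in> S t then \<eta> t else 0) / 2 * (g s \<bullet> g t))
        = (\<Sum>t\<in>I. \<Sum>s\<in>I. (if s \<in> S t then \<eta> t else 0) / 2 * (g s \<bullet> g t))"
      by (rule sum.swap)
    also have "\<dots> = (\<Sum>t\<in>I. \<Sum>s\<in>S t. \<eta> t / 2 * (g s \<bullet> g t))"
    proof (rule sum.cong[OF refl])
      fix t assume t: "t \<in> I"
      have "S t \<subseteq> {1..<t}" using Sp t unfolding I_def by blast
      hence sub: "S t \<subseteq> I" using t unfolding I_def by auto
      have "(\<Sum>s\<in>I. (if s \<in> S t then \<eta> t else 0) / 2 * (g s \<bullet> g t))
          = (\<Sum>s\<in>I. (if s \<in> S t then \<eta> t / 2 * (g s \<bullet> g t) else 0))"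
        by (intro sum.cong refl) auto
      also have "\<dots> = (\<Sum>s\<in>S t. \<eta> t / 2 * (g s \<bullet> g t))"
        using sum.If_cases[OF fI, of "\<lambda>s. s \<in> S t" "\<lambda>s. \<eta> t / 2 * (g s \<bullet> g t)" "\<lambda>_. 0"] sub
        by (simp add: Int_absorb1 Int_commute)
      finally show "(\<Sum>s\<in>I. (if s \<in> S t then \<eta> t else 0) / 2 * (g s \<bullet> g t)) = (\<Sum>s\<in>S t. \<eta> t / 2 * (g s \<bullet> g t))" .
    qed
    also have "\<dots> = (\<Sum>t\<in>I. \<eta> t * (g t \<bullet> (\<Sum>s\<in>S t. g s))) / 2"
      by (simp add: sum_divide_distrib inner_sum_right sum_distrib_left inner_commute)
    finally show ?thesis .
  qed
  have E2: "(\<Sum>s\<in>I. \<Sum>t\<in>I. (if t \<in> S s then \<eta> s else 0) / 2 * (g s \<bullet> g t))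
      = (\<Sum>t\<in>I. \<eta> t * (g t \<bullet> (\<Sum>s\<in>S t. g s))) / 2"
  proof -
    have "(\<Sum>s\<in>I. \<Sum>t\<in>I. (if t \<in> S s then \<eta> s else 0) / 2 * (g s \<bullet> g t))
        = (\<Sum>s\<in>I. \<Sum>t\<in>S s. \<eta> s / 2 * (g s \<bullet> g t))"
    proof (rule sum.cong[OF refl])
      fix t assume t: "t \<in> I"
      have "S t \<subseteq> {1..<t}" using Sp t unfolding I_def by blast
      hence sub: "S t \<subseteq> I" using t unfolding I_def by auto
      have "(\<Sum>s\<in>I. (if s \<in> S t then \<eta> t else 0) / 2 * (g t \<bullet> g s))
          = (\<Sum>s\<in>I. (if s \<in> S t then \<eta> t / 2 * (g t \<bullet> g s) else 0))"
        by (intro sum.cong refl) auto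
      also have "\<dots> = (\<Sum>s\<in>S t. \<eta> t / 2 * (g t \<bullet> g s))"
        using sum.If_cases[OF fI, of "\<lambda>s. s \<in> S t" "\<lambda>s. \<eta> t / 2 * (g t \<bullet> g s)" "\<lambda>_. 0"] sub
        by (simp add: Int_absorb1 Int_commute)
      finally show "(\<Sum>s\<in>I. (if s \<in> S t then \<eta> t else 0) / 2 * (g t \<bullet> g s)) = (\<Sum>s\<in>S t. \<eta> t / 2 * (g t \<bullet> g s))" .
    qed
    also have "\<dots> = (\<Sum>t\<in>I. \<eta> t * (g t \<bullet> (\<Sum>s\<in>S t. g s))) / 2"
      by (simp add: sum_divide_distrib inner_sum_right sum_distrib_left)
    finally show ?thesis .
  qed
  have E3: "(\<Sum>s\<in>I. \<Sum>t\<in>I. (if s = t then \<gamma> t else 0) / 2 * (g s \<bullet> g t))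
      = (\<Sum>t\<in>I. \<gamma> t / 2 * (norm (g t))\<^sup>2)"
  proof -
    have "(\<Sum>s\<in>I. \<Sum>t\<in>I. (if s = t then \<gamma> t else 0) / 2 * (g s \<bullet> g t))
       = (\<Sum>s\<in>I. \<Sum>t\<in>I. (if s = t then \<gamma> t / 2 * (norm (g t))\<^sup>2 else 0))"
      by (intro sum.cong refl) (simp add: power2_norm_eq_inner)
    also have "\<dots> = (\<Sum>t\<in>I. \<gamma> t / 2 * (norm (g t))\<^sup>2)"
      by (intro sum.cong refl) (simp add: fI)
    finally show ?thesis .
  qed
  have E4: "(\<Sum>s\<in>I. \<Sum>t\<in>I. e / 2 * (g s \<bullet> g t)) = e / 2 * (norm (\<Sum>t\<in>I. g t))\<^sup>2"
    by (simp add: power2_norm_eq_inner inner_sum_left inner_sum_right sum_distrib_left inner_commute)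
  have "(\<Sum>s\<in>I. \<Sum>t\<in>I. c s t * (g s \<bullet> g t))
     = (\<Sum>s\<in>I. \<Sum>t\<in>I. (if s \<in> S t then \<eta> t else 0) / 2 * (g s \<bullet> g t))
     + (\<Sum>s\<in>I. \<Sum>t\<in>I. (if t \<in> S s then \<eta> s else 0) / 2 * (g s \<bullet> g t))
     + (\<Sum>s\<in>I. \<Sum>t\<in>I. (if s = t then \<gamma> t else 0) / 2 * (g s \<bullet> g t))
     - (\<Sum>s\<in>I. \<Sum>t\<in>I. e / 2 * (g s \<bullet> g t))"
    by (simp add: c_def sum.distrib sum_subtractf algebra_simps)
  also have "\<dots> = (\<Sum>t\<in>I. \<eta> t * (g t \<bullet> (\<Sum>s\<in>S t. g s))) + (\<Sum>t\<in>I. \<gamma> t / 2 * (norm (g t))\<^sup>2)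
      - e / 2 * (norm (\<Sum>t\<in>I. g t))\<^sup>2"
    unfolding E1 E2 E3 E4 by simp
  finally show ?thesis using lower unfolding I_def by linarith
qed

lemma sqrt_step:
  fixes a F :: real
  assumes "0 \<le> a" "a \<le> F" "0 < F"
  shows "a / sqrt F \<le> 2 * (sqrt F - sqrt (F - a))"
proof -
  define u where "u = sqrt F"
  define v where "v = sqrt (F - a)"
  have u0: "0 < u" using assms by (simp add: u_def)
  have v0: "0 \<le> v" "v \<le> u" using assms by (auto simp: u_def v_def)
  have a: "a = u\<^sup>2 - v\<^sup>2" using assms by (simp add: u_def v_def)
  have "a = (u - v) * (u + v)" using a by (simp add: power2_eq_square algebra_simps)
  also have "\<dots> \<le> (u - v) * (2 * u)" using v0 by (intro mult_left_mono) auto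
  finally have "a \<le> 2 * (u - v) * u" by (simp add: mult.commute mult.left_commute)
  hence "a / u \<le> 2 * (u - v)" using u0 by (simp add: divide_simps)
  thus ?thesis by (simp add: u_def v_def)
qed

lemma telescope:
  fixes h :: "nat \<Rightarrow> real"
  shows "(\<Sum>t\<in>{1..T}. h t - h (t - 1)) = h T - h 0"
proof (induction T)
  case 0 then show ?case by simp
next
  case (Suc T)
  have "{1..Suc T} = insert (Suc T) {1..T}" by auto
  then show ?case using Suc by simp
qed

lemma min_recip_mono: "x \<le> y \<Longrightarrow> min_recip x b \<le> min_recip y b"
  by (auto simp: min_recip_def)

lemma min_recip_le: "min_recip x b \<le> x"
  by (auto simp: min_recip_def)

lemma min_recip_nonneg: "0 \<le> x \<Longrightarrow> 0 \<le> b \<Longrightarrow> 0 \<le> min_recip x b"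
  by (auto simp: min_recip_def)

lemma final_arith:
  fixes r w VT c1 L Q e :: real
  assumes r: "0 \<le> r" and L: "0 \<le> L" and Q: "1 \<le> Q" and c1: "0 < c1" and VT: "0 \<le> VT"
    and e: "e = min_recip (r / (2 * sqrt (Q * (VT + c1)))) (sqrt 2 * L * Q)"
  shows "r * w - e / 2 * w\<^sup>2 + r * sqrt Q * sqrt VT
         \<le> max (sqrt 2 * r\<^sup>2 * L * Q) (2 * r * sqrt (Q * (VT + c1)))"
proof -
  define A where "A = sqrt (Q * (VT + c1))"
  have A0: "0 < A" using Q c1 VT by (simp add: A_def)
  have sv: "r * sqrt Q * sqrt VT \<le> r * A"
  proof -
    have "sqrt Q * sqrt VT = sqrt (Q * VT)" by (simp add: real_sqrt_mult)
    also have "\<dots> \<le> A" unfolding A_def using Q c1 by (intro real_sqrt_le_mono) (simp add: algebra_simps)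
    finally show ?thesis using r by (simp add: mult.assoc mult_left_mono)
  qed
  show ?thesis
  proof (cases "r = 0")
    case True
    have "0 \<le> e" unfolding e using True L Q by (intro min_recip_nonneg) auto
    hence "r * w - e / 2 * w\<^sup>2 + r * sqrt Q * sqrt VT \<le> 0" using True by simp
    moreover have "0 \<le> 2 * r * sqrt (Q * (VT + c1))" using r A0 unfolding A_def by simp
    ultimately show ?thesis by linarith
  next
    case False
    hence rp: "0 < r" using r by simp
    have e_pos: "0 < e"
      unfolding e min_recip_def using rp A0 L Q by (auto simp: A_def[symmetric])
    have amgm: "r * w - e / 2 * w\<^sup>2 \<le> r\<^sup>2 / (2 * e)"
    proof -
      have "0 \<le> (r - e * w)\<^sup>2" by simp
      hence "2 * e * (r * w - e / 2 * w\<^sup>2) \<le> r\<^sup>2" by (simp add: power2_eq_square algebra_simps)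
      thus ?thesis using e_pos by (simp add: divide_simps mult.commute)
    qed
    show ?thesis
    proof (cases "e = r / (2 * A)")
      case True
      have "2 * e = r / A" using True A0 by simp
      hence "r\<^sup>2 / (2 * e) = r * A" using rp A0 by (simp add: power2_eq_square)
      hence "r * w - e / 2 * w\<^sup>2 + r * sqrt Q * sqrt VT \<le> 2 * r * A" using amgm sv by linarith
      thus ?thesis unfolding A_def by linarith
    next
      case False
      hence Lp: "sqrt 2 * L * Q \<noteq> 0" and em: "e = min (r / (2 * A)) (1 / (sqrt 2 * L * Q))"
        using e by (auto simp: min_recip_def A_def split: if_splits)
      hence e2: "e = 1 / (sqrt 2 * L * Q)" "1 / (sqrt 2 * L * Q) \<le> r / (2 * A)" using False by (auto simp: min_def split: if_splits)
      have Lq: "0 < sqrt 2 * L * Q" using Lp L Q by (simp add: less_le)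
      have r2: "r\<^sup>2 / (2 * e) = sqrt 2 * r\<^sup>2 * L * Q / 2" using e2(1) Lq by (simp add: field_simps)
      have "2 * A \<le> r * (sqrt 2 * L * Q)" using e2(2) Lq A0 rp by (simp add: divide_simps mult.commute)
      hence "r * A \<le> sqrt 2 * r\<^sup>2 * L * Q / 2" using rp by (simp add: power2_eq_square algebra_simps)
      hence "r * w - e / 2 * w\<^sup>2 + r * sqrt Q * sqrt VT \<le> sqrt 2 * r\<^sup>2 * L * Q" using amgm sv r2 by linarith
      thus ?thesis by linarith
    qed
  qed
qed

theorem proposition7:
  fixes T :: nat and \<tau> :: nat
    and f :: "nat \<Rightarrow> 'a::euclidean_space \<Rightarrow> real"
    and V :: "nat \<Rightarrow> 'a \<Rightarrow> 'a"
    and Vt :: "nat \<Rightarrow> 'a \<Rightarrow> 'a"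
    and act :: "nat \<Rightarrow> 'ag"
    and S :: "'ag \<Rightarrow> nat \<Rightarrow> nat set"
    and \<sigma> :: "'ag \<Rightarrow> nat \<Rightarrow> nat"
    and x xh :: "nat \<Rightarrow> 'a"
    and \<gamma> \<eta> :: "nat \<Rightarrow> real"
    and L G r :: real and p :: 'a
  assumes convex: "\<forall>t\<in>{1..T}. convex_on UNIV (f t)"
    and grad: "\<forall>t\<in>{1..T}. \<forall>y. (f t has_derivative (\<lambda>h. V t y \<bullet> h)) (at y)"
    and lip: "\<forall>t\<in>{1..T}. L-lipschitz_on UNIV (V t)"
    and bndV: "\<forall>t\<in>{1..T}. \<forall>y. norm (V t y) \<le> G"
    and bndVt: "\<forall>t\<in>{1..T}. \<forall>y. norm (Vt t y) \<le> G"
    and S_past: "\<forall>i. \<forall>t\<in>{1..T}. S i t \<subseteq> {1..<t}"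
    and S_mono: "\<forall>i. \<forall>t\<in>{1..T}. \<forall>t'\<in>{1..T}. t \<le> t' \<longrightarrow> S i t \<subseteq> S i t'"
    and \<sigma>_perm: "\<forall>i. bij_betw (\<sigma> i) {1..T} {1..T}"
    and \<sigma>_cons: "\<forall>i. \<forall>t\<in>{1..T}. S i t = \<sigma> i ` {1..card (S i t)}"
    and delay: "\<forall>t\<in>{1..T}. {1..t - \<tau> - 1} \<subseteq> S (act t) t"
    and S_R: "\<forall>i. \<forall>t\<in>{1..T}.
                S (act t) t \<subseteq> \<sigma> i ` {1..<inv_into {1..T} (\<sigma> i) t}"
    and hint: "\<forall>t\<in>{1..T}. (S (act t) t \<noteq> {} \<longrightarrow> (\<exists>s\<in>S (act t) t. Vt t = V s))
                          \<and> (S (act t) t = {} \<longrightarrow> Vt t = (\<lambda>_. 0))"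
    and x_eq: "\<forall>t\<in>{1..T}. x t = x 1 - \<eta> t *\<^sub>R (\<Sum>s\<in>S (act t) t. V s (xh s))"
    and xh_eq: "\<forall>t\<in>{1..T}. xh t = x t - \<gamma> t *\<^sub>R Vt t (x t)"
    and \<gamma>_eq: "\<forall>t\<in>{1..T}. \<gamma> t =
        (let D = (\<Sum>s\<in>S (act t) t. (norm (V s (x s) - Vt s (x s)))\<^sup>2) in
          min_recip (r * sqrt (4 * real \<tau> + 1) / (2 * sqrt (D + 4 * G\<^sup>2 * (real \<tau> + 1))))
                    (sqrt 2 * L))"
    and \<eta>_eq: "\<forall>t\<in>{1..T}. \<eta> t =
        (let D = (\<Sum>s\<in>S (act t) t. (norm (V s (x s) - Vt s (x s)))\<^sup>2) in
          min_recip (r / (2 * sqrt ((4 * real \<tau> + 1) * (D + 4 * G\<^sup>2 * (3 * real \<tau> + 1)))))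
                    (sqrt 2 * L * (4 * real \<tau> + 1)))"
    and p_near: "norm (p - x 1) \<le> r"
  shows "(\<Sum>t=1..T. f t (xh t)) - (\<Sum>t=1..T. f t p)
         \<le> max (sqrt 2 * r\<^sup>2 * L * (4 * real \<tau> + 1))
                (2 * r * sqrt ((4 * real \<tau> + 1) *
                   ((\<Sum>t=1..T. (norm (V t (x t) - Vt t (x t)))\<^sup>2) + 4 * G\<^sup>2 * (3 * real \<tau> + 1))))"
proof -
  define I where "I = {1..T}"
  define g where "g = (\<lambda>t. V t (xh t))"
  define m where "m = (\<lambda>t. Vt t (x t))"
  define S' where "S' = (\<lambda>t. S (act t) t)"
  define dd where "dd = (\<lambda>t. (norm (V t (x t) - Vt t (x t)))\<^sup>2)"
  define D where "D = (\<lambda>t. \<Sum>s\<in>S' t. dd s)"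
  define Q where "Q = 4 * real \<tau> + 1"
  define c1 where "c1 = 4 * G\<^sup>2 * (3 * real \<tau> + 1)"
  define c2 where "c2 = 4 * G\<^sup>2 * (real \<tau> + 1)"
  define H where "H = (\<lambda>Dv. min_recip (r / (2 * sqrt ((4 * real \<tau> + 1) * (Dv + 4 * G\<^sup>2 * (3 * real \<tau> + 1)))))
                    (sqrt 2 * L * (4 * real \<tau> + 1)))"
  define \<Gamma> where "\<Gamma> = (\<lambda>Dv. min_recip (r * sqrt (4 * real \<tau> + 1) / (2 * sqrt (Dv + 4 * G\<^sup>2 * (real \<tau> + 1))))
                    (sqrt 2 * L))"
  define VT where "VT = (\<Sum>t=1..T. (norm (V t (x t) - Vt t (x t)))\<^sup>2)"
  define e where "e = H VT"
  define W where "W = (\<Sum>t\<in>I. g t)"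
  define U where "U = (\<lambda>t. \<Sum>s\<in>S' t. g s)"
  have r0: "0 \<le> r" using p_near norm_ge_zero order_trans by blast
  have fI: "finite I" by (simp add: I_def)
  have \<eta>H: "\<eta> t = H (D t)" if "t \<in> I" for t
    using \<eta>_eq that by (simp add: I_def H_def D_def S'_def dd_def Let_def)
  have \<gamma>\<Gamma>: "\<gamma> t = \<Gamma> (D t)" if "t \<in> I" for t
    using \<gamma>_eq that by (simp add: I_def \<Gamma>_def D_def S'_def dd_def Let_def)
  have RHS0: "0 \<le> max (sqrt 2 * r\<^sup>2 * L * (4 * real \<tau> + 1))
                (2 * r * sqrt ((4 * real \<tau> + 1) *
                   ((\<Sum>t=1..T. (norm (V t (x t) - Vt t (x t)))\<^sup>2) + 4 * G\<^sup>2 * (3 * real \<tau> + 1))))"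
  proof -
    have "0 \<le> (\<Sum>t=1..T. (norm (V t (x t) - Vt t (x t)))\<^sup>2)" by (intro sum_nonneg) auto
    hence "0 \<le> (4 * real \<tau> + 1) * ((\<Sum>t=1..T. (norm (V t (x t) - Vt t (x t)))\<^sup>2) + 4 * G\<^sup>2 * (3 * real \<tau> + 1))"
      by simp
    hence "0 \<le> 2 * r * sqrt ((4 * real \<tau> + 1) * ((\<Sum>t=1..T. (norm (V t (x t) - Vt t (x t)))\<^sup>2) + 4 * G\<^sup>2 * (3 * real \<tau> + 1)))"
      using r0 by simp
    thus ?thesis by linarith
  qed
  have stepA: "(\<Sum>t=1..T. f t (xh t)) - (\<Sum>t=1..T. f t p) \<le> (\<Sum>t\<in>I. g t \<bullet> (xh t - p))"
  proof -
    have "(\<Sum>t\<in>I. f t (xh t) - f t p) \<le> (\<Sum>t\<in>I. g t \<bullet> (xh t - p))"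
    proof (rule sum_mono)
      fix t assume t: "t \<in> I"
      have "f t (xh t) + V t (xh t) \<bullet> (p - xh t) \<le> f t p"
        using conv_grad[of "f t" "V t (xh t)" "xh t" p] convex grad t by (auto simp: I_def)
      moreover have "V t (xh t) \<bullet> (p - xh t) = - (g t \<bullet> (xh t - p))"
        by (simp add: g_def inner_diff_right)
      ultimately show "f t (xh t) - f t p \<le> g t \<bullet> (xh t - p)" by linarith
    qed
    thus ?thesis by (simp add: I_def sum_subtractf)
  qed
  show ?thesis
  proof (cases "T = 0")
    case True
    thus ?thesis using RHS0 by simp
  next
    case Tpos: False
    have oneI: "1 \<in> I" using Tpos by (simp add: I_def)
    have G0: "0 \<le> G" using bndV oneI unfolding I_def by (meson norm_ge_zero order_trans)
    have L0: "0 \<le> L" using lip oneI unfolding I_def lipschitz_on_def by blast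
    show ?thesis
    proof (cases "G = 0")
      case True
      have "g t = 0" if "t \<in> I" for t using bndV that True by (auto simp: g_def I_def)
      hence "(\<Sum>t\<in>I. g t \<bullet> (xh t - p)) = 0" by simp
      thus ?thesis using stepA RHS0 by linarith
    next
      case False
      hence Gp: "0 < G" using G0 by simp
      have c1p: "0 < c1" using Gp by (simp add: c1_def)
      have c2p: "0 < c2" using Gp by (simp add: c2_def)
      have Q1: "1 \<le> Q" by (simp add: Q_def)
      have Sp': "\<forall>t\<in>I. S' t \<subseteq> {1..<t}" using S_past by (simp add: S'_def I_def)
      have Sd': "\<forall>t\<in>I. {1..t-\<tau>-1} \<subseteq> S' t" using delay by (simp add: S'_def I_def)
      have SI: "S' t \<subseteq> I" if "t \<in> I" for t
      proof -
        have "S' t \<subseteq> {1..<t}" using Sp' that by blast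
        thus ?thesis using that by (auto simp: I_def)
      qed
      have fS: "finite (S' t)" if "t \<in> I" for t using SI[OF that] fI finite_subset by blast
      have dd0: "0 \<le> dd t" for t by (simp add: dd_def)
      have ddle: "dd t \<le> 4 * G\<^sup>2" if "t \<in> I" for t
      proof -
        have "norm (V t (x t) - Vt t (x t)) \<le> norm (V t (x t)) + norm (Vt t (x t))" by (rule norm_triangle_ineq4)
        also have "\<dots> \<le> 2 * G"
        proof -
          have "norm (V t (x t)) \<le> G" "norm (Vt t (x t)) \<le> G" using bndV bndVt that unfolding I_def by blast+
          thus ?thesis by linarith
        qed
        finally have "norm (V t (x t) - Vt t (x t)) \<le> 2 * G" .
        hence "(norm (V t (x t) - Vt t (x t)))\<^sup>2 \<le> (2 * G)\<^sup>2" by (intro power_mono) auto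
        thus ?thesis by (simp add: dd_def power2_eq_square)
      qed
      have D0: "0 \<le> D t" for t by (simp add: D_def dd0 sum_nonneg)
      have VT_eq: "VT = (\<Sum>t\<in>I. dd t)" by (simp add: VT_def I_def dd_def)
      have VT0: "0 \<le> VT" unfolding VT_eq by (simp add: dd0 sum_nonneg)
      have Hdef: "H a = min_recip (r / (2 * sqrt (Q * (a + c1)))) (sqrt 2 * L * Q)" for a
        by (simp add: H_def Q_def c1_def)
      have \<Gamma>def: "\<Gamma> a = min_recip (r * sqrt Q / (2 * sqrt (a + c2))) (sqrt 2 * L)" for a
        by (simp add: \<Gamma>_def Q_def c2_def)
      have Hanti: "H b \<le> H a" if "0 \<le> a" "a \<le> b" for a b
        unfolding Hdef
      proof (rule min_recip_mono)
        have "0 < sqrt (Q * (a + c1))" using that c1p Q1 by simp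
        moreover have "sqrt (Q * (a + c1)) \<le> sqrt (Q * (b + c1))"
          using that Q1 by (intro real_sqrt_le_mono mult_left_mono) auto
        ultimately show "r / (2 * sqrt (Q * (b + c1))) \<le> r / (2 * sqrt (Q * (a + c1)))"
          using r0 by (intro divide_left_mono) auto
      qed
      have H0: "0 \<le> H a" if "0 \<le> a" for a
        unfolding Hdef using r0 L0 Q1 that c1p by (intro min_recip_nonneg) auto
      have \<Gamma>0: "0 \<le> \<Gamma> a" if "0 \<le> a" for a
        unfolding \<Gamma>def using r0 L0 Q1 that c2p by (intro min_recip_nonneg) auto
      have \<Gamma>le: "\<Gamma> a \<le> r * sqrt Q / (2 * sqrt (a + c2))" for a
        unfolding \<Gamma>def by (rule min_recip_le)
      have L\<Gamma>: "(L * \<Gamma> a)\<^sup>2 \<le> 1 / 2" if "0 \<le> a" for a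
      proof (cases "L = 0")
        case True thus ?thesis by simp
      next
        case False
        hence Lp: "0 < L" using L0 by simp
        have "\<Gamma> a \<le> 1 / (sqrt 2 * L)" unfolding \<Gamma>def min_recip_def using Lp by auto
        hence "L * \<Gamma> a \<le> L * (1 / (sqrt 2 * L))" using Lp by (intro mult_left_mono) auto
        also have "\<dots> = 1 / sqrt 2" using Lp by simp
        finally have a1: "L * \<Gamma> a \<le> 1 / sqrt 2" .
        have a0: "0 \<le> L * \<Gamma> a" using Lp \<Gamma>0[OF that] by simp
        have "(L * \<Gamma> a)\<^sup>2 \<le> (1 / sqrt 2)\<^sup>2" using a0 a1 by (intro power_mono) auto
        thus ?thesis by (simp add: power_divide)
      qed
      have \<Gamma>Q: "Q * H a \<le> \<Gamma> a" if "0 \<le> a" for a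
      proof -
        have sq: "Q * (r / (2 * sqrt (Q * (a + c1)))) = r * sqrt Q / (2 * sqrt (a + c1))"
        proof -
          have qq: "Q = sqrt Q * sqrt Q" using Q1 by simp
          have sp: "0 < sqrt Q" "0 < sqrt (a + c1)" using Q1 c1p that by auto
          have "sqrt (Q * (a + c1)) = sqrt Q * sqrt (a + c1)" by (simp add: real_sqrt_mult)
          hence "Q * (r / (2 * sqrt (Q * (a + c1)))) = (sqrt Q * sqrt Q) * r / (2 * (sqrt Q * sqrt (a + c1)))"
            using qq by simp
          also have "\<dots> = r * sqrt Q / (2 * sqrt (a + c1))" using sp by (simp add: field_simps)
          finally show ?thesis .
        qed
        have le1: "r * sqrt Q / (2 * sqrt (a + c1)) \<le> r * sqrt Q / (2 * sqrt (a + c2))"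
        proof -
          have "c2 \<le> c1" unfolding c1_def c2_def by (intro mult_left_mono) auto
          hence "sqrt (a + c2) \<le> sqrt (a + c1)" by simp
          moreover have "0 < sqrt (a + c2)" using that c2p by simp
          ultimately show ?thesis using r0 Q1 by (intro divide_left_mono mult_pos_pos) auto
        qed
        show ?thesis
        proof (cases "L = 0")
          case True
          have "Q * H a = r * sqrt Q / (2 * sqrt (a + c1))" unfolding Hdef min_recip_def using True sq by simp
          also have "\<dots> \<le> \<Gamma> a" unfolding \<Gamma>def min_recip_def using True le1 by simp
          finally show ?thesis .
        next
          case False
          hence Lp: "0 < L" using L0 by simp
          have "Q * H a = Q * min (r / (2 * sqrt (Q * (a + c1)))) (1 / (sqrt 2 * L * Q))"
            unfolding Hdef min_recip_def using Lp Q1 by simp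
          also have "\<dots> = min (Q * (r / (2 * sqrt (Q * (a + c1))))) (Q * (1 / (sqrt 2 * L * Q)))"
            using Q1 by (simp add: min_mult_distrib_left)
          also have "\<dots> = min (r * sqrt Q / (2 * sqrt (a + c1))) (1 / (sqrt 2 * L))"
            using sq Q1 by simp
          also have "\<dots> \<le> min (r * sqrt Q / (2 * sqrt (a + c2))) (1 / (sqrt 2 * L))"
            using le1 by simp
          also have "\<dots> = \<Gamma> a" unfolding \<Gamma>def min_recip_def using Lp by simp
          finally show ?thesis .
        qed
      qed
      have Pprop: "S' s \<subseteq> S' t" if t: "t \<in> I" and s: "s \<in> S' t" for s t
      proof -
        define i where "i = act t"
        have bij: "bij_betw (\<sigma> i) I I" using \<sigma>_perm by (simp add: I_def)
        have cons: "S' t = \<sigma> i ` {1..card (S' t)}" using \<sigma>_cons t by (simp add: S'_def i_def I_def)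
        have sI: "s \<in> I" using SI[OF t] s by auto
        have ct: "card (S' t) \<le> T"
        proof -
          have "card (S' t) \<le> card {1..<t}" using Sp' t by (intro card_mono) auto
          thus ?thesis using t unfolding I_def by simp linarith
        qed
        have "s \<in> \<sigma> i ` {1..card (S' t)}" using s cons by metis
        then obtain k where k: "k \<in> {1..card (S' t)}" "s = \<sigma> i k" by blast
        have kI: "k \<in> I" using k ct by (auto simp: I_def)
        have inv: "inv_into I (\<sigma> i) s = k"
          using k(2) kI bij by (simp add: bij_betw_def inv_into_f_f)
        have "S (act s) s \<subseteq> \<sigma> i ` {1..<inv_into {1..T} (\<sigma> i) s}"
          using S_R sI by (simp add: I_def)
        also have "\<dots> = \<sigma> i ` {1..<k}" using inv by (simp add: I_def)
        also have "\<dots> \<subseteq> \<sigma> i ` {1..card (S' t)}" using k by auto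
        finally show ?thesis using cons by (simp add: S'_def)
      qed
      have Dmono: "D s \<le> D t" if "t \<in> I" "s \<in> S' t" for s t
        unfolding D_def using Pprop[OF that] fS[OF that(1)] dd0 by (intro sum_mono2) auto
      have DVT: "D t \<le> VT" if "t \<in> I" for t
        unfolding D_def VT_eq using SI[OF that] fI dd0 by (intro sum_mono2) auto
      have \<eta>0: "0 \<le> \<eta> t" if "t \<in> I" for t using \<eta>H[OF that] H0 D0 by simp
      have e0: "0 \<le> e" unfolding e_def using H0 VT0 by simp
      have mono: "\<forall>t\<in>I. \<forall>s\<in>S' t. \<eta> t \<le> \<eta> s"
      proof (intro ballI)
        fix t s assume t: "t \<in> I" and s: "s \<in> S' t"
        have sI: "s \<in> I" using SI[OF t] s by auto
        show "\<eta> t \<le> \<eta> s" unfolding \<eta>H[OF t] \<eta>H[OF sI] using Hanti D0 Dmono[OF t s] by simp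
      qed
      have ele: "\<forall>t\<in>I. e \<le> \<eta> t"
        using \<eta>H Hanti D0 DVT unfolding e_def by simp
      have gam: "\<forall>t\<in>I. (2 * real \<tau> + 1) * \<eta> t \<le> \<gamma> t"
      proof
        fix t assume t: "t \<in> I"
        have "(2 * real \<tau> + 1) * \<eta> t \<le> Q * \<eta> t" using \<eta>0[OF t] by (intro mult_right_mono) (auto simp: Q_def)
        also have "\<dots> \<le> \<gamma> t" unfolding \<eta>H[OF t] \<gamma>\<Gamma>[OF t] using \<Gamma>Q D0 by simp
        finally show "(2 * real \<tau> + 1) * \<eta> t \<le> \<gamma> t" .
      qed
      have QUAD: "e / 2 * (norm W)\<^sup>2 \<le> (\<Sum>t\<in>I. \<eta> t * (g t \<bullet> U t)) + (\<Sum>t\<in>I. \<gamma> t / 2 * (norm (g t))\<^sup>2)"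
      proof -
        have "e / 2 * (norm (\<Sum>t\<in>{1..T}. g t))\<^sup>2 \<le> (\<Sum>t\<in>{1..T}. \<eta> t * (g t \<bullet> (\<Sum>s\<in>S' t. g s))) + (\<Sum>t\<in>{1..T}. \<gamma> t / 2 * (norm (g t))\<^sup>2)"
          by (rule quad[OF Sp'[unfolded I_def] Sd'[unfolded I_def] mono[unfolded I_def] ele[unfolded I_def] e0 gam[unfolded I_def]])
        thus ?thesis unfolding I_def W_def U_def .
      qed
      have stepB: "(\<Sum>t\<in>I. g t \<bullet> (xh t - p)) = W \<bullet> (x 1 - p) - (\<Sum>t\<in>I. \<eta> t * (g t \<bullet> U t)) - (\<Sum>t\<in>I. \<gamma> t * (g t \<bullet> m t))"
      proof -
        have "g t \<bullet> (xh t - p) = g t \<bullet> (x 1 - p) - \<eta> t * (g t \<bullet> U t) - \<gamma> t * (g t \<bullet> m t)" if t: "t \<in> I" for t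
        proof -
          have xt: "x t = x 1 - \<eta> t *\<^sub>R (\<Sum>s\<in>S (act t) t. V s (xh s))"
            using x_eq t unfolding I_def by blast
          have xht: "xh t = x t - \<gamma> t *\<^sub>R Vt t (x t)"
            using xh_eq t unfolding I_def by blast
          have "xh t = x 1 - \<eta> t *\<^sub>R U t - \<gamma> t *\<^sub>R m t"
            unfolding U_def S'_def g_def m_def by (subst xht, subst xt) (rule refl)
          hence "xh t - p = (x 1 - p) - \<eta> t *\<^sub>R U t - \<gamma> t *\<^sub>R m t" by (simp add: algebra_simps)
          thus ?thesis by (simp add: inner_diff_right)
        qed
        hence "(\<Sum>t\<in>I. g t \<bullet> (xh t - p)) = (\<Sum>t\<in>I. g t \<bullet> (x 1 - p) - \<eta> t * (g t \<bullet> U t) - \<gamma> t * (g t \<bullet> m t))"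
          by (intro sum.cong) auto
        also have "\<dots> = W \<bullet> (x 1 - p) - (\<Sum>t\<in>I. \<eta> t * (g t \<bullet> U t)) - (\<Sum>t\<in>I. \<gamma> t * (g t \<bullet> m t))"
          by (simp add: sum_subtractf W_def inner_sum_left)
        finally show ?thesis .
      qed
      have stepC: "\<gamma> t / 2 * (norm (g t))\<^sup>2 - \<gamma> t * dd t \<le> \<gamma> t * (g t \<bullet> m t)" if t: "t \<in> I" for t
      proof -
        have g0: "0 \<le> \<gamma> t" using \<gamma>\<Gamma>[OF t] \<Gamma>0 D0 by simp
        have LG: "(L * \<gamma> t)\<^sup>2 \<le> 1 / 2" using \<gamma>\<Gamma>[OF t] L\<Gamma> D0 by simp
        define d where "d = norm (V t (x t) - Vt t (x t))"
        have lipt: "L-lipschitz_on UNIV (V t)" using lip t by (simp add: I_def)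
        have "norm (g t - m t) \<le> norm (V t (xh t) - V t (x t)) + d"
          unfolding d_def g_def m_def
          using norm_triangle_ineq[of "V t (xh t) - V t (x t)" "V t (x t) - Vt t (x t)"] by simp
        also have "norm (V t (xh t) - V t (x t)) \<le> L * norm (xh t - x t)"
          using lipt unfolding lipschitz_on_def by (simp add: dist_norm)
        also have "xh t - x t = - (\<gamma> t *\<^sub>R m t)"
        proof -
          have "xh t = x t - \<gamma> t *\<^sub>R Vt t (x t)" using xh_eq t unfolding I_def by blast
          thus ?thesis by (simp add: m_def)
        qed
        finally have nb: "norm (g t - m t) \<le> L * \<gamma> t * norm (m t) + d" using g0 by simp
        have "(norm (g t - m t))\<^sup>2 \<le> (L * \<gamma> t * norm (m t) + d)\<^sup>2"
          using nb by (intro power_mono) auto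
        also have "\<dots> \<le> 2 * (L * \<gamma> t * norm (m t))\<^sup>2 + 2 * d\<^sup>2"
          using sum_squares_bound[of "L * \<gamma> t * norm (m t)" d] by (simp add: power2_eq_square algebra_simps)
        also have "(L * \<gamma> t * norm (m t))\<^sup>2 = (L * \<gamma> t)\<^sup>2 * (norm (m t))\<^sup>2" by (simp add: power_mult_distrib)
        also have "2 * ((L * \<gamma> t)\<^sup>2 * (norm (m t))\<^sup>2) \<le> (norm (m t))\<^sup>2"
          using LG mult_right_mono[OF LG, of "(norm (m t))\<^sup>2"] by simp
        finally have gm: "(norm (g t - m t))\<^sup>2 \<le> (norm (m t))\<^sup>2 + 2 * d\<^sup>2" by simp
        have "(norm (g t - m t))\<^sup>2 = (norm (g t))\<^sup>2 - 2 * (g t \<bullet> m t) + (norm (m t))\<^sup>2"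
          by (simp add: power2_norm_eq_inner inner_diff_left inner_diff_right inner_commute)
        hence "(norm (g t))\<^sup>2 / 2 - d\<^sup>2 \<le> g t \<bullet> m t" using gm by linarith
        hence "\<gamma> t * ((norm (g t))\<^sup>2 / 2 - d\<^sup>2) \<le> \<gamma> t * (g t \<bullet> m t)" using g0 by (rule mult_left_mono)
        thus ?thesis by (simp add: dd_def d_def algebra_simps)
      qed
      define F where "F = (\<lambda>k. \<Sum>s\<in>{1..k}. dd s)"
      have stepE: "(\<Sum>t\<in>I. \<gamma> t * dd t) \<le> r * sqrt Q * sqrt VT"
      proof -
        have each: "\<gamma> t * dd t \<le> r * sqrt Q * (sqrt (F t) - sqrt (F (t - 1)))" if t: "t \<in> I" for t
        proof -
          have t1: "1 \<le> t" "t \<le> T" using t by (auto simp: I_def)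
          have Fstep: "F t = F (t - 1) + dd t"
          proof -
            have e1: "{1..t} = insert t {1..t-1}" using t1 by auto
            have e2: "t \<notin> {1..t-1}" using t1 by auto
            show ?thesis unfolding F_def e1 using e2 by (simp add: add.commute)
          qed
          have F0: "0 \<le> F k" for k by (simp add: F_def dd0 sum_nonneg)
          have BF: "F t \<le> D t + c2"
          proof -
            define J where "J = {1..t} - {1..t-\<tau>-1}"
            have "F t = (\<Sum>s\<in>J. dd s) + (\<Sum>s\<in>{1..t-\<tau>-1}. dd s)"
              unfolding F_def J_def by (rule sum.subset_diff) auto
            also have "(\<Sum>s\<in>{1..t-\<tau>-1}. dd s) \<le> D t"
              unfolding D_def using Sd' t fS[OF t] dd0 by (intro sum_mono2) auto
            also have "(\<Sum>s\<in>J. dd s) \<le> c2"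
            proof -
              have "(\<Sum>s\<in>J. dd s) \<le> (\<Sum>s\<in>J. 4 * G\<^sup>2)"
              proof (rule sum_mono)
                fix s assume s: "s \<in> J"
                hence "s \<in> I" using t1 by (auto simp: J_def I_def)
                thus "dd s \<le> 4 * G\<^sup>2" by (rule ddle)
              qed
              also have "\<dots> = real (card J) * (4 * G\<^sup>2)" by simp
              also have "\<dots> \<le> (real \<tau> + 1) * (4 * G\<^sup>2)"
              proof (intro mult_right_mono)
                have "J \<subseteq> {t-\<tau>..t}" by (auto simp: J_def)
                hence "card J \<le> card {t-\<tau>..t}" by (intro card_mono) auto
                also have "\<dots> \<le> \<tau> + 1" by simp
                finally show "real (card J) \<le> real \<tau> + 1" by linarith
              qed simp
              finally show ?thesis by (simp add: c2_def algebra_simps)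
            qed
            finally show ?thesis by simp
          qed
          have \<gamma>b: "\<gamma> t \<le> r * sqrt Q / (2 * sqrt (D t + c2))" using \<gamma>\<Gamma>[OF t] \<Gamma>le by simp
          show ?thesis
          proof (cases "dd t = 0")
            case True
            have "sqrt (F (t - 1)) \<le> sqrt (F t)" using Fstep dd0 by simp
            thus ?thesis using True r0 Q1 by simp
          next
            case False
            hence ddp: "0 < dd t" using dd0 by (simp add: less_le)
            hence Fp: "0 < F t" using Fstep F0 by (metis add_nonneg_pos)
            have "\<gamma> t * dd t \<le> r * sqrt Q / (2 * sqrt (D t + c2)) * dd t"
              using \<gamma>b ddp by (intro mult_right_mono) auto
            also have "\<dots> \<le> r * sqrt Q / (2 * sqrt (F t)) * dd t"
              using BF Fp ddp r0 Q1 by (intro mult_right_mono divide_left_mono) auto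
            also have "\<dots> = r * sqrt Q / 2 * (dd t / sqrt (F t))" by simp
            also have "\<dots> \<le> r * sqrt Q / 2 * (2 * (sqrt (F t) - sqrt (F t - dd t)))"
              using sqrt_step[of "dd t" "F t"] ddp Fp Fstep F0 r0 Q1
              by (intro mult_left_mono) auto
            also have "F t - dd t = F (t - 1)" using Fstep by simp
            also have "r * sqrt Q / 2 * (2 * (sqrt (F t) - sqrt (F (t - 1)))) = r * sqrt Q * (sqrt (F t) - sqrt (F (t - 1)))"
              by simp
            finally show ?thesis .
          qed
        qed
        have "(\<Sum>t\<in>I. \<gamma> t * dd t) \<le> (\<Sum>t\<in>I. r * sqrt Q * (sqrt (F t) - sqrt (F (t - 1))))"
          using each by (rule sum_mono)
        also have "\<dots> = r * sqrt Q * (\<Sum>t\<in>{1..T}. sqrt (F t) - sqrt (F (t - 1)))"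
          by (simp add: I_def sum_distrib_left)
        also have "(\<Sum>t\<in>{1..T}. sqrt (F t) - sqrt (F (t - 1))) = sqrt (F T) - sqrt (F 0)"
          by (rule telescope)
        also have "F T = VT" by (simp add: F_def VT_eq I_def)
        also have "F 0 = 0" by (simp add: F_def)
        finally show ?thesis by simp
      qed
      have sumC: "(\<Sum>t\<in>I. \<gamma> t / 2 * (norm (g t))\<^sup>2) - (\<Sum>t\<in>I. \<gamma> t * dd t) \<le> (\<Sum>t\<in>I. \<gamma> t * (g t \<bullet> m t))"
      proof -
        have "(\<Sum>t\<in>I. \<gamma> t / 2 * (norm (g t))\<^sup>2 - \<gamma> t * dd t) \<le> (\<Sum>t\<in>I. \<gamma> t * (g t \<bullet> m t))"
          using stepC by (rule sum_mono)
        thus ?thesis by (simp add: sum_subtractf)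
      qed
      have Wb: "W \<bullet> (x 1 - p) \<le> r * norm W"
      proof -
        have "W \<bullet> (x 1 - p) \<le> norm W * norm (x 1 - p)" by (rule norm_cauchy_schwarz)
        also have "\<dots> \<le> norm W * r" using p_near by (intro mult_left_mono) (auto simp: norm_minus_commute)
        finally show ?thesis by (simp add: mult.commute)
      qed
      have FA: "r * norm W - e / 2 * (norm W)\<^sup>2 + r * sqrt Q * sqrt VT
         \<le> max (sqrt 2 * r\<^sup>2 * L * Q) (2 * r * sqrt (Q * (VT + c1)))"
        using final_arith[OF r0 L0 Q1 c1p VT0, of e "norm W"] unfolding e_def Hdef by simp
      have "(\<Sum>t=1..T. f t (xh t)) - (\<Sum>t=1..T. f t p) \<le> r * norm W - e / 2 * (norm W)\<^sup>2 + r * sqrt Q * sqrt VT"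
        using stepA stepB sumC stepE QUAD Wb by linarith
      also note FA
      finally show ?thesis by (simp add: Q_def c1_def VT_def)
    qed
  qed
qed

end
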